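(* Let $p\ge1$ and let $G_1,G_2$ be finite discrete probability measures on $\mathbb{R}^d\times S_d^{++}(\mathbb{R})$. Suppose that for every $(\mu_0,\Sigma_0)\in\mathbb{R}^d\times S_d^{++}(\mathbb{R})$, $$\int d((\mu_1,\Sigma_1),(\mu_0,\Sigma_0))^p\,dG_1(\mu_1,\Sigma_1)<\infty\quad\text{and}\quad\int d((\mu_0,\Sigma_0),(\mu_2,\Sigma_2))^p\,dG_2(\mu_2,\Sigma_2)<\infty,$$ where $d((\mu_1,\Sigma_1),(\mu_2,\Sigma_2))=\sqrt{\|\mu_1-\mu_2\|_2^2+0.25\,\log(\lambda_{\max}(\Sigma_1,\Sigma_2))^2}$ and $\lambda_{\max}(\Sigma_1,\Sigma_2)$ is the largest eigenvalue $\lambda$ of the generalized eigenvalue problem $\Sigma_1u=\lambda\Sigma_2u$. Then $\text{SMix-}W_p^p(G_1,G_2)<\infty$.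
   Context: $S_d^{++}(\mathbb{R})$ is the set of $d\times d$ real symmetric positive definite matrices. Let $\mathbb{S}=\{w\in\mathbb{R}^2:\|w\|_2=1\}$ and $\mathbb{S}^{d-1}=\{v\in\mathbb{R}^d:\|v\|_2=1\}$, with $\mathcal{U}(\cdot)$ the uniform distribution. For $v\in\mathbb{S}^{d-1}$ and $w=(w_1,w_2)\in\mathbb{S}$ set $P_{v,w}(\mu,\Sigma)=w_1\langle v,\mu\rangle+w_2\log\big(\sqrt{v^\top\Sigma v}\big)$. For finite discrete probability measures $G_1,G_2$ on $\mathbb{R}^d\times S_d^{++}(\mathbb{R})$ the sliced mixture Wasserstein distance is $$\text{SMix-}W_p^p(G_1,G_2)=\mathbb{E}_{(w,v)\sim\mathcal{U}(\mathbb{S})\otimes\mathcal{U}(\mathbb{S}^{d-1})}\big[W_p^p(P_{v,w}\sharp G_1,P_{v,w}\sharp G_2)\big],$$ where $\sharp$ denotes push-forward and $W_p^p(\alpha,\beta)=\inf_{\pi\in\Pi(\alpha,\beta)}\int|x-y|^p\,d\pi(x,y)$ is the $p$-th power of the Wasserstein-$p$ distance between probability measures on $\mathbb{R}$. *)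

theory Defs
  imports "HOL-Probability.Probability"
begin

definition spd :: "real^'n^'n \<Rightarrow> bool" where
  "spd A \<longleftrightarrow> transpose A = A \<and> (\<forall>x. x \<noteq> 0 \<longrightarrow> x \<bullet> (A *v x) > 0)"

definition finite_discrete_mix :: "((real^'n) \<times> (real^'n^'n)) pmf \<Rightarrow> bool" where
  "finite_discrete_mix G \<longleftrightarrow> finite (set_pmf G) \<and> (\<forall>(m,S)\<in>set_pmf G. spd S)"

definition lambda_max :: "real^'n^'n \<Rightarrow> real^'n^'n \<Rightarrow> real" where
  "lambda_max S1 S2 = Max {l. \<exists>u. u \<noteq> 0 \<and> S1 *v u = l *\<^sub>R (S2 *v u)}"

definition mix_dist :: "(real^'n) \<times> (real^'n^'n) \<Rightarrow> (real^'n) \<times> (real^'n^'n) \<Rightarrow> real" where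
  "mix_dist a b = (case a of (m1,S1) \<Rightarrow> case b of (m2,S2) \<Rightarrow>
      sqrt ((norm (m1 - m2))\<^sup>2 + 0.25 * (ln (lambda_max S1 S2))\<^sup>2))"

(* Uniform distribution on the unit sphere: push-forward of the uniform distribution
   on the unit ball under radial projection x \<mapsto> x / |x| (cone measure = normalized
   surface measure). *)
definition unif_sphere :: "'a::euclidean_space measure" where
  "unif_sphere = distr (uniform_measure lborel (ball 0 1)) borel (\<lambda>x. x /\<^sub>R norm x)"

definition proj_vw :: "real^'n \<Rightarrow> real^2 \<Rightarrow> (real^'n) \<times> (real^'n^'n) \<Rightarrow> real" where
  "proj_vw v w x = (case x of (m,S) \<Rightarrow> w$1 * (v \<bullet> m) + w$2 * ln (sqrt (v \<bullet> (S *v v))))"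

definition wass_pp :: "real \<Rightarrow> real pmf \<Rightarrow> real pmf \<Rightarrow> real" where
  "wass_pp p \<alpha> \<beta> = Inf {measure_pmf.expectation \<pi> (\<lambda>(x,y). \<bar>x - y\<bar> powr p) | \<pi>.
      map_pmf fst \<pi> = \<alpha> \<and> map_pmf snd \<pi> = \<beta>}"

definition smix_wpp :: "real \<Rightarrow> ((real^'n) \<times> (real^'n^'n)) pmf \<Rightarrow> ((real^'n) \<times> (real^'n^'n)) pmf \<Rightarrow> ennreal" where
  "smix_wpp p G1 G2 = (\<integral>\<^sup>+ (w,v). ennreal (wass_pp p (map_pmf (proj_vw v w) G1) (map_pmf (proj_vw v w) G2))
      \<partial>(unif_sphere \<Otimes>\<^sub>M unif_sphere))"

end

theory Submission
  imports Defs
begin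

lemma unif_sphere_prob: "prob_space (unif_sphere :: 'a::euclidean_space measure)"
proof -
  have "measure lborel (ball (0::'a) 1) > 0" using content_ball_pos[of 1 "0::'a"] by simp
  hence "emeasure lborel (ball (0::'a) 1) \<noteq> 0"
    by (metis measure_def enn2real_0 less_irrefl)
  hence "prob_space (uniform_measure lborel (ball (0::'a) 1))"
    using emeasure_lborel_ball_finite[of "0::'a" 1] by (intro prob_space_uniform_measure) auto
  then show ?thesis unfolding unif_sphere_def
    by (intro prob_space.prob_space_distr) auto
qed

lemma unif_sphere_AE: "AE x in (unif_sphere :: 'a::euclidean_space measure). norm x = 1"
  unfolding unif_sphere_def
proof (subst AE_distr_iff)
  show "(\<lambda>x. x /\<^sub>R norm x) \<in> uniform_measure lborel (ball (0::'a) 1) \<rightarrow>\<^sub>M borel" by simp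
  show "{x \<in> space borel. norm (x::'a) = 1} \<in> sets borel" by measurable
  show "AE x in uniform_measure lborel (ball (0::'a) 1). norm (x /\<^sub>R norm x) = 1"
    by (intro AE_uniform_measureI) (auto intro: AE_mp[OF AE_lborel_singleton[of 0]])
qed

lemma atom_bound:
  assumes "spd S"
  shows "\<exists>B. \<forall>w\<in>sphere (0::real^2) 1. \<forall>v\<in>sphere (0::real^'n) 1. \<bar>proj_vw v w (m,S)\<bar> \<le> B"
proof -
  let ?K = "sphere (0::real^2) 1 \<times> sphere (0::real^'n) 1"
  let ?f = "\<lambda>z::(real^2)\<times>(real^'n). (fst z)$1 * (snd z \<bullet> m) + (fst z)$2 * ln (sqrt (snd z \<bullet> (S *v snd z)))"
  have pos: "snd z \<bullet> (S *v snd z) > 0" if "z \<in> ?K" for z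
  proof -
    have "snd z \<noteq> 0" using that by auto
    thus ?thesis using assms unfolding spd_def by blast
  qed
  have lin: "continuous_on ?K (\<lambda>z. S *v snd z)"
    by (intro continuous_on_compose2[OF matrix_vector_mult_linear_continuous_on] continuous_intros) auto
  have pos2: "\<forall>z\<in>?K. sqrt (snd z \<bullet> (S *v snd z)) \<noteq> 0"
    using pos by (metis less_irrefl real_sqrt_eq_zero_cancel_iff)
  have "continuous_on ?K ?f"
    by (intro continuous_intros lin pos2)
  hence "compact (?f ` ?K)" by (intro compact_continuous_image compact_Times) auto
  then have "bounded (?f ` ?K)" by (rule compact_imp_bounded)
  then obtain B where B: "\<forall>y\<in>?f ` ?K. norm y \<le> B"
    unfolding bounded_iff by (elim exE)
  show ?thesis
  proof (intro exI[of _ B] ballI)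
    fix w v assume "w \<in> sphere (0::real^2) 1" "v \<in> sphere (0::real^'n) 1"
    hence wvK: "(w,v) \<in> ?K" by simp
    have "norm (?f (w,v)) \<le> B" by (rule B[rule_format, OF imageI, OF wvK])
    thus "\<bar>proj_vw v w (m,S)\<bar> \<le> B" by (simp add: proj_vw_def)
  qed
qed

lemma wass_bound:
  fixes \<alpha> \<beta> :: "real pmf"
  assumes fa: "finite (set_pmf \<alpha>)" and fb: "finite (set_pmf \<beta>)"
    and ca: "\<forall>x\<in>set_pmf \<alpha>. \<bar>x\<bar> \<le> C" and cb: "\<forall>y\<in>set_pmf \<beta>. \<bar>y\<bar> \<le> C"
    and p: "p \<ge> 0"
  shows "wass_pp p \<alpha> \<beta> \<le> (2*C) powr p"
proof -
  let ?X = "{measure_pmf.expectation \<pi> (\<lambda>(x,y). \<bar>x - y\<bar> powr p) | \<pi>.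
      map_pmf fst \<pi> = \<alpha> \<and> map_pmf snd \<pi> = \<beta>}"
  let ?E = "measure_pmf.expectation (pair_pmf \<alpha> \<beta>) (\<lambda>(x,y). \<bar>x - y\<bar> powr p)"
  have mem: "?E \<in> ?X" by (auto simp: map_fst_pair_pmf map_snd_pair_pmf)
  have bdd: "bdd_below ?X"
    by (rule bdd_belowI[of _ 0]) (auto intro!: Bochner_Integration.integral_nonneg)
  have "wass_pp p \<alpha> \<beta> \<le> ?E" unfolding wass_pp_def by (rule cInf_lower[OF mem bdd])
  also have "?E \<le> (2*C) powr p"
  proof (rule measure_pmf.integral_le_const)
    show "integrable (measure_pmf (pair_pmf \<alpha> \<beta>)) (\<lambda>(x,y). \<bar>x - y\<bar> powr p)"
      using fa fb by (intro integrable_measure_pmf_finite) (simp add: set_pair_pmf)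
    show "AE z in measure_pmf (pair_pmf \<alpha> \<beta>). (\<lambda>(x,y). \<bar>x - y\<bar> powr p) z \<le> (2*C) powr p"
    proof (rule AE_pmfI)
      fix z assume "z \<in> set_pmf (pair_pmf \<alpha> \<beta>)"
      then obtain x y where z: "z = (x,y)" "x \<in> set_pmf \<alpha>" "y \<in> set_pmf \<beta>"
        by (auto simp: set_pair_pmf)
      have "\<bar>x - y\<bar> \<le> 2*C" using ca cb z by fastforce
      hence "\<bar>x - y\<bar> powr p \<le> (2*C) powr p" using p by (intro powr_mono2) auto
      thus "(\<lambda>(x,y). \<bar>x - y\<bar> powr p) z \<le> (2*C) powr p" using z by simp
    qed
  qed
  finally show ?thesis .
qed

theorem proposition3:
  fixes p :: real
    and G1 G2 :: "((real^'n) \<times> (real^'n^'n)) pmf"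
  assumes "p \<ge> 1"
    and "finite_discrete_mix G1" and "finite_discrete_mix G2"
    and "\<And>m0 S0. spd S0 \<Longrightarrow>
           (\<integral>\<^sup>+ x. ennreal (mix_dist x (m0,S0) powr p) \<partial>(measure_pmf G1)) < \<infinity>"
    and "\<And>m0 S0. spd S0 \<Longrightarrow>
           (\<integral>\<^sup>+ x. ennreal (mix_dist (m0,S0) x powr p) \<partial>(measure_pmf G2)) < \<infinity>"
  shows "smix_wpp p G1 G2 < \<infinity>"
proof -
  let ?A = "set_pmf G1 \<union> set_pmf G2"
  have finA: "finite ?A" using assms(2,3) unfolding finite_discrete_mix_def by auto
  have "\<forall>a\<in>?A. \<exists>B. \<forall>w\<in>sphere (0::real^2) 1. \<forall>v\<in>sphere (0::real^'n) 1. \<bar>proj_vw v w a\<bar> \<le> B"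
  proof
    fix a assume "a \<in> ?A"
    then obtain m S where a: "a = (m,S)" "spd S"
      using assms(2,3) unfolding finite_discrete_mix_def by (cases a) auto
    show "\<exists>B. \<forall>w\<in>sphere (0::real^2) 1. \<forall>v\<in>sphere (0::real^'n) 1. \<bar>proj_vw v w a\<bar> \<le> B"
      using atom_bound[OF a(2), of m] a(1) by simp
  qed
  then obtain Bf where Bf: "\<And>a w v. a \<in> ?A \<Longrightarrow> w \<in> sphere (0::real^2) 1 \<Longrightarrow> v\<in>sphere (0::real^'n) 1 \<Longrightarrow> \<bar>proj_vw v w a\<bar> \<le> Bf a"
    by metis
  define C where "C = (\<Sum>a\<in>?A. \<bar>Bf a\<bar>)"
  have BC: "\<bar>proj_vw v w a\<bar> \<le> C" if "a \<in> ?A" "w \<in> sphere (0::real^2) 1" "v\<in>sphere (0::real^'n) 1" for a w v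
  proof -
    have "\<bar>proj_vw v w a\<bar> \<le> \<bar>Bf a\<bar>" using Bf[OF that] by linarith
    also have "\<dots> \<le> C" unfolding C_def using finA that(1)
      by (intro member_le_sum) auto
    finally show ?thesis .
  qed
  have wb: "wass_pp p (map_pmf (proj_vw v w) G1) (map_pmf (proj_vw v w) G2) \<le> (2*C) powr p"
    if "norm w = 1" "norm v = 1" for w :: "real^2" and v :: "real^'n"
    using finA assms(1) that by (intro wass_bound) (auto intro!: BC)
  interpret P: prob_space "(unif_sphere::(real^2) measure) \<Otimes>\<^sub>M (unif_sphere::(real^'n) measure)"
    by (intro prob_space_pair unif_sphere_prob)
  have AE2: "AE z in (unif_sphere::(real^2) measure) \<Otimes>\<^sub>M (unif_sphere::(real^'n) measure).
      norm (fst z) = 1 \<and> norm (snd z) = 1"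
  proof -
    have s1: "sigma_finite_measure (unif_sphere::(real^2) measure)"
      using unif_sphere_prob prob_space_imp_sigma_finite by blast
    have s2: "sigma_finite_measure (unif_sphere::(real^'n) measure)"
      using unif_sphere_prob prob_space_imp_sigma_finite by blast
    interpret pair_sigma_finite "unif_sphere::(real^2) measure" "unif_sphere::(real^'n) measure"
      using s1 s2 by (simp add: pair_sigma_finite_def)
    show ?thesis
    proof (rule AE_pair_measure)
      show "{x \<in> space ((unif_sphere::(real^2) measure) \<Otimes>\<^sub>M (unif_sphere::(real^'n) measure)).
          norm (fst x) = 1 \<and> norm (snd x) = 1} \<in> sets ((unif_sphere::(real^2) measure) \<Otimes>\<^sub>M (unif_sphere::(real^'n) measure))"
        unfolding unif_sphere_def by measurable
      have "AE y in (unif_sphere::(real^'n) measure). norm y = 1" by (rule unif_sphere_AE)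
      hence H: "norm x = 1 \<Longrightarrow> AE y in (unif_sphere::(real^'n) measure). norm (fst (x,y)) = 1 \<and> norm (snd (x,y)) = 1" for x :: "real^2"
        by (rule AE_mp) (auto intro!: AE_I2)
      show "AE x in (unif_sphere::(real^2) measure). AE y in (unif_sphere::(real^'n) measure). norm (fst (x,y)) = 1 \<and> norm (snd (x,y)) = 1"
        by (rule AE_mp[OF unif_sphere_AE]) (rule AE_I2, rule impI, rule H)
    qed
  qed
  have "smix_wpp p G1 G2 \<le> (\<integral>\<^sup>+ z. ennreal ((2*C) powr p)
      \<partial>((unif_sphere::(real^2) measure) \<Otimes>\<^sub>M (unif_sphere::(real^'n) measure)))"
    unfolding smix_wpp_def
    by (intro nn_integral_mono_AE, rule AE_mp[OF AE2]) (auto intro!: ennreal_leI wb)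
  also have "\<dots> = ennreal ((2*C) powr p)" using P.emeasure_space_1 by simp
  also have "\<dots> < \<infinity>" by simp
  finally show ?thesis .
qed

end
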